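(* For $n\ge3$, the set $\mathcal G$ is a proper subset of $\mathcal S_1$, the class of $n\times n$ stochastic Sarymsakov matrices.
   Context: Let $\mathcal N=\{1,\ldots,n\}$. A matrix is stochastic if it is entrywise nonnegative with row sums $1$; it is SIA if $\lim_{m\to\infty}P^m=\mathbf 1c^T$ for some nonnegative $c$ with entries summing to $1$. For stochastic $P$ and $\mathcal A\subseteq\mathcal N$, $F_P(\mathcal A)=\{j:\ p_{ij}>0\text{ for some } i\in\mathcal A\}$. $\mathcal S_1$ is the set of stochastic $n\times n$ matrices $P$ (Sarymsakov matrices) such that for any disjoint nonempty $\mathcal A,\tilde{\mathcal A}\subseteq\mathcal N$, either $F_P(\mathcal A)\cap F_P(\tilde{\mathcal A})\neq\emptyset$, or $F_P(\mathcal A)\cap F_P(\tilde{\mathcal A})=\emptyset$ and $|F_P(\mathcal A)\cup F_P(\tilde{\mathcal A})|>|\mathcal A\cup\tilde{\mathcal A}|$. $\mathcal G$ is the set of $n\times n$ SIA matrices $P$ such that $QP$ is SIA for every $n\times n$ SIA matrix $Q$. *)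

theory Defs
  imports "HOL-Analysis.Analysis"
begin

text \<open>Square matrices of size n are indexed by a finite type 'n with CARD('n) = n;
  the index set N = {1..n} is UNIV :: 'n set.\<close>

definition stochastic :: "real^'n^'n \<Rightarrow> bool" where
  "stochastic P \<longleftrightarrow> (\<forall>i j. P $ i $ j \<ge> 0) \<and> (\<forall>i. (\<Sum>j\<in>UNIV. P $ i $ j) = 1)"

fun mpow :: "real^'n^'n \<Rightarrow> nat \<Rightarrow> real^'n^'n" where
  "mpow P 0 = mat 1"
| "mpow P (Suc m) = mpow P m ** P"

definition SIA :: "real^'n^'n \<Rightarrow> bool" where
  "SIA P \<longleftrightarrow> stochastic P \<and>
     (\<exists>c :: real^'n. (\<forall>j. c $ j \<ge> 0) \<and> (\<Sum>j\<in>UNIV. c $ j) = 1 \<and>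
        (\<lambda>m. mpow P m) \<longlonglongrightarrow> (\<chi> i j. c $ j))"

definition F_P :: "real^'n^'n \<Rightarrow> 'n set \<Rightarrow> 'n set" where
  "F_P P A = {j. \<exists>i\<in>A. P $ i $ j > 0}"

definition S1 :: "(real^'n^'n) set" where
  "S1 = {P. stochastic P \<and>
     (\<forall>A B :: 'n set. A \<noteq> {} \<and> B \<noteq> {} \<and> A \<inter> B = {} \<longrightarrow>
        (F_P P A \<inter> F_P P B \<noteq> {} \<or>
         (F_P P A \<inter> F_P P B = {} \<and> card (F_P P A \<union> F_P P B) > card (A \<union> B))))}"

definition G_class :: "(real^'n^'n) set" where
  "G_class = {P. SIA P \<and> (\<forall>Q :: real^'n^'n. SIA Q \<longrightarrow> SIA (Q ** P))}"

end

theory Submission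
  imports Defs
begin

lemma mult_entry: "((X::real^'n^'n) ** M) $ i $ j = (\<Sum>k\<in>UNIV. X$i$k * M$k$j)"
  by (simp add: matrix_matrix_mult_def)

lemma stoch_row_pos:
  assumes "stochastic (P::real^'n^'n)" shows "\<exists>j. P$i$j > 0"
proof (rule ccontr)
  assume "\<not> ?thesis"
  hence "\<forall>j. P$i$j = 0" using assms unfolding stochastic_def by (metis antisym not_less)
  hence "(\<Sum>j\<in>UNIV. P$i$j) = 0" by simp
  thus False using assms unfolding stochastic_def by simp
qed

lemma closed_pow:
  fixes M :: "real^'n^'n"
  assumes "\<forall>x\<in>X. \<forall>j. M$x$j \<noteq> 0 \<longrightarrow> j\<in>X"
  shows "\<forall>x\<in>X. \<forall>j. mpow M m $ x $ j \<noteq> 0 \<longrightarrow> j \<in> X"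
proof (induction m)
  case 0 then show ?case by (simp add: mat_def)
next
  case (Suc m)
  show ?case
  proof (intro ballI allI impI)
    fix x j assume x: "x \<in> X" and nz: "mpow M (Suc m) $ x $ j \<noteq> 0"
    hence "(\<Sum>k\<in>UNIV. mpow M m $x$k * M$k$j) \<noteq> 0" by (simp add: mult_entry)
    then obtain k where "mpow M m $x$k * M$k$j \<noteq> 0"
      by (meson sum.not_neutral_contains_not_neutral)
    hence "mpow M m $x$k \<noteq> 0" "M$k$j \<noteq> 0" by auto
    thus "j \<in> X" using Suc.IH x assms by blast
  qed
qed

lemma period_pow:
  fixes M :: "real^'n^'n"
  assumes hX: "\<forall>x\<in>X. \<forall>j. M$x$j \<noteq> 0 \<longrightarrow> j\<in>Y"
      and hY: "\<forall>x\<in>Y. \<forall>j. M$x$j \<noteq> 0 \<longrightarrow> j\<in>X"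
  shows "(\<forall>x\<in>X. \<forall>j. mpow M m $ x $ j \<noteq> 0 \<longrightarrow> j \<in> (if even m then X else Y)) \<and>
         (\<forall>x\<in>Y. \<forall>j. mpow M m $ x $ j \<noteq> 0 \<longrightarrow> j \<in> (if even m then Y else X))"
proof (induction m)
  case 0 then show ?case by (simp add: mat_def)
next
  case (Suc m)
  have step: "\<exists>k. mpow M m $x$k \<noteq> 0 \<and> M$k$j \<noteq> 0" if "mpow M (Suc m) $ x $ j \<noteq> 0" for x j
  proof -
    from that have "(\<Sum>k\<in>UNIV. mpow M m $x$k * M$k$j) \<noteq> 0" by (simp add: mult_entry)
    then obtain k where "mpow M m $x$k * M$k$j \<noteq> 0"
      by (meson sum.not_neutral_contains_not_neutral)
    thus ?thesis by auto
  qed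
  show ?case
  proof (cases "even m")
    case True
    then show ?thesis using Suc.IH step hX hY by (smt (verit) even_Suc)
  next
    case False
    then show ?thesis using Suc.IH step hX hY by (smt (verit) even_Suc)
  qed
qed

lemma SIA_lim:
  assumes "SIA (M::real^'n^'n)"
  shows "\<exists>c::real^'n. (\<Sum>j\<in>UNIV. c $ j) = 1 \<and> (\<forall>i j. (\<lambda>m. mpow M m $ i $ j) \<longlonglongrightarrow> c $ j)"
proof -
  obtain c :: "real^'n" where c: "(\<Sum>j\<in>UNIV. c $ j) = 1" and l: "(\<lambda>m. mpow M m) \<longlonglongrightarrow> (\<chi> i j. c $ j)"
    using assms unfolding SIA_def by blast
  have "(\<lambda>m. mpow M m $ i $ j) \<longlonglongrightarrow> c $ j" for i j
    using tendsto_vec_nth[OF tendsto_vec_nth[OF l, of i], of j] by simp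
  thus ?thesis using c by blast
qed

lemma notSIA_closed:
  fixes M :: "real^'n^'n"
  assumes "x0 \<in> X" "y0 \<in> Y" "X \<inter> Y = {}"
    "\<forall>x\<in>X. \<forall>j. M$x$j \<noteq> 0 \<longrightarrow> j\<in>X" "\<forall>x\<in>Y. \<forall>j. M$x$j \<noteq> 0 \<longrightarrow> j\<in>Y"
  shows "\<not> SIA M"
proof
  assume "SIA M"
  then obtain c :: "real^'n" where c: "(\<Sum>j\<in>UNIV. c $ j) = 1"
    and l: "\<And>i j. (\<lambda>m. mpow M m $ i $ j) \<longlonglongrightarrow> c $ j" using SIA_lim by blast
  have z: "c $ j = 0" if "x \<in> Z" "j \<notin> Z" "\<forall>x\<in>Z. \<forall>j. M$x$j \<noteq> 0 \<longrightarrow> j\<in>Z" for x j Z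
  proof -
    have "\<forall>m. mpow M m $ x $ j = 0" using closed_pow[OF that(3)] that(1,2) by blast
    hence "(\<lambda>m. mpow M m $ x $ j) = (\<lambda>m. 0)" by auto
    thus ?thesis using l[of x j] LIMSEQ_unique tendsto_const by metis
  qed
  have "c $ j = 0" for j
  proof (cases "j \<in> X")
    case True
    hence "j \<notin> Y" using assms(3) by blast
    then show ?thesis using z[of y0 Y j] assms by blast
  next
    case False
    then show ?thesis using z[of x0 X j] assms by blast
  qed
  thus False using c by simp
qed

lemma notSIA_period:
  fixes M :: "real^'n^'n"
  assumes "x0 \<in> X" "X \<inter> Y = {}"
    "\<forall>x\<in>X. \<forall>j. M$x$j \<noteq> 0 \<longrightarrow> j\<in>Y" "\<forall>x\<in>Y. \<forall>j. M$x$j \<noteq> 0 \<longrightarrow> j\<in>X"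
  shows "\<not> SIA M"
proof
  assume "SIA M"
  then obtain c :: "real^'n" where c: "(\<Sum>j\<in>UNIV. c $ j) = 1"
    and l: "\<And>i j. (\<lambda>m. mpow M m $ i $ j) \<longlonglongrightarrow> c $ j" using SIA_lim by blast
  note P = period_pow[OF assms(3,4)]
  have "c $ j = 0" for j
  proof (cases "j \<in> X")
    case True
    hence jY: "j \<notin> Y" using assms(2) by blast
    have sm: "strict_mono (\<lambda>m::nat. 2*m+1)" by (simp add: strict_mono_Suc_iff)
    have "\<forall>m. mpow M (2*m+1) $ x0 $ j = 0" using P assms(1) jY by fastforce
    moreover have "((\<lambda>m. mpow M m $ x0 $ j) \<circ> (\<lambda>m. 2*m+1)) \<longlonglongrightarrow> c $ j"
      using LIMSEQ_subseq_LIMSEQ[OF l sm] .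
    ultimately have "(\<lambda>m. 0) \<longlonglongrightarrow> c $ j" by (simp add: comp_def)
    thus ?thesis using LIMSEQ_unique tendsto_const by metis
  next
    case False
    have sm: "strict_mono (\<lambda>m::nat. 2*m)" by (simp add: strict_mono_Suc_iff)
    have "\<forall>m. mpow M (2*m) $ x0 $ j = 0" using P assms(1) False by fastforce
    moreover have "((\<lambda>m. mpow M m $ x0 $ j) \<circ> (\<lambda>m. 2*m)) \<longlonglongrightarrow> c $ j"
      using LIMSEQ_subseq_LIMSEQ[OF l sm] .
    ultimately have "(\<lambda>m. 0) \<longlonglongrightarrow> c $ j" by (simp add: comp_def)
    thus ?thesis using LIMSEQ_unique tendsto_const by metis
  qed
  thus False using c by simp
qed

definition detm :: "('n \<Rightarrow> 'n) \<Rightarrow> real^'n^'n" where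
  "detm q = (\<chi> i j. if j = q i then 1 else 0)"

lemma detm_mult: "(detm q ** M) $ i $ j = M $ (q i) $ j"
proof -
  have "(\<Sum>k\<in>UNIV. (if k = q i then 1 else 0) * M$k$j) = (\<Sum>k\<in>UNIV. if k = q i then M$k$j else 0)"
    by (rule sum.cong) auto
  also have "\<dots> = M $ (q i) $ j" by simp
  finally show ?thesis by (simp add: mult_entry detm_def)
qed

lemma detm_SIA:
  fixes q :: "'n::finite \<Rightarrow> 'n"
  assumes qq: "\<And>x. q (q x) = k"
  shows "SIA (detm q)"
proof -
  have qk: "q k = k" using qq[of "q k"] qq[of k] by (metis qq)
  have st: "stochastic (detm q)" unfolding stochastic_def detm_def by simp
  have pw: "mpow (detm q) (Suc (Suc m)) = detm (\<lambda>_. k)" for m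
  proof (induction m)
    case 0
    show ?case by (simp add: vec_eq_iff detm_mult qq) (simp add: detm_def qq)
  next
    case (Suc m)
    have "mpow (detm q) (Suc (Suc (Suc m))) = detm (\<lambda>_. k) ** detm q"
      using Suc by (metis mpow.simps(2))
    then show ?case by (simp add: vec_eq_iff detm_mult) (simp add: detm_def qk)
  qed
  define c :: "real^'n" where "c = (\<chi> j. if j = k then 1 else 0)"
  have "detm (\<lambda>_. k) = (\<chi> i j. c $ j)" by (simp add: c_def detm_def)
  hence "(\<lambda>m. mpow (detm q) (Suc (Suc m))) \<longlonglongrightarrow> (\<chi> i j. c $ j)" using pw by simp
  hence "(\<lambda>m. mpow (detm q) (m + 2)) \<longlonglongrightarrow> (\<chi> i j. c $ j)" by (simp add: numeral_2_eq_2)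
  hence "(\<lambda>m. mpow (detm q) m) \<longlonglongrightarrow> (\<chi> i j. c $ j)" by (rule LIMSEQ_offset)
  moreover have "(\<forall>j. c $ j \<ge> 0)" "(\<Sum>j\<in>UNIV. c $ j) = 1" by (auto simp: c_def)
  ultimately show ?thesis using st unfolding SIA_def by blast
qed

lemma G_sub_S1:
  assumes PG: "(P::real^'n^'n) \<in> G_class"
  shows "P \<in> S1"
proof -
  have sia: "SIA P" and GQ: "\<And>Q. SIA Q \<Longrightarrow> SIA (Q ** P)" using PG by (auto simp: G_class_def)
  have st: "stochastic P" using sia SIA_def by auto
  have nn: "\<And>i j. P$i$j \<ge> 0" using st stochastic_def by auto
  have nz: "\<And>i j. P$i$j \<noteq> 0 \<Longrightarrow> P$i$j > 0" using nn by (simp add: less_le)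
  show ?thesis unfolding S1_def
  proof (intro CollectI conjI allI impI st)
    fix A B :: "'n set" assume H: "A \<noteq> {} \<and> B \<noteq> {} \<and> A \<inter> B = {}"
    define FA where "FA = F_P P A"
    define FB where "FB = F_P P B"
    show "F_P P A \<inter> F_P P B \<noteq> {} \<or>
         (F_P P A \<inter> F_P P B = {} \<and> card (F_P P A \<union> F_P P B) > card (A \<union> B))"
    proof (rule ccontr)
      assume "\<not> ?thesis"
      hence dis: "FA \<inter> FB = {}" and cd: "card (FA \<union> FB) \<le> card (A \<union> B)"
        by (auto simp: FA_def FB_def)
      have memA: "\<And>x j. x \<in> A \<Longrightarrow> P$x$j \<noteq> 0 \<Longrightarrow> j \<in> FA" using nz by (auto simp: FA_def F_P_def)
      have memB: "\<And>x j. x \<in> B \<Longrightarrow> P$x$j \<noteq> 0 \<Longrightarrow> j \<in> FB" using nz by (auto simp: FB_def F_P_def)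
      obtain a0 where a0: "a0 \<in> A" using H by blast
      obtain b0 where b0: "b0 \<in> B" using H by blast
      obtain ja where "P$a0$ja > 0" using stoch_row_pos[OF st] by blast
      hence ja: "ja \<in> FA" using memA a0 by auto
      obtain jb where "P$b0$jb > 0" using stoch_row_pos[OF st] by blast
      hence jb: "jb \<in> FB" using memB b0 by auto
      have key: False if q1: "\<And>x. x \<in> FA \<Longrightarrow> q x \<in> A" and q2: "\<And>x. x \<in> FB \<Longrightarrow> q x \<in> B"
          and qq: "\<And>x. q (q x) = k" for q k
      proof -
        have "SIA (detm q ** P)" using GQ detm_SIA[of q k] qq by blast
        moreover have "\<not> SIA (detm q ** P)"
        proof (rule notSIA_closed[OF ja jb dis])
          show "\<forall>x\<in>FA. \<forall>j. (detm q ** P)$x$j \<noteq> 0 \<longrightarrow> j\<in>FA"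
            using q1 memA by (auto simp: detm_mult)
          show "\<forall>x\<in>FB. \<forall>j. (detm q ** P)$x$j \<noteq> 0 \<longrightarrow> j\<in>FB"
            using q2 memB by (auto simp: detm_mult)
        qed
        ultimately show False by blast
      qed
      show False
      proof (cases "\<exists>u\<in>A-FA. \<exists>b\<in>B-FA. True")
        case True
        then obtain u b where u: "u \<in> A" "u \<notin> FA" and b: "b \<in> B" "b \<notin> FA" by blast
        show False
        proof (rule key[of "\<lambda>x. if x \<in> FA then u else b" b])
          show "\<And>x. x \<in> FA \<Longrightarrow> (if x \<in> FA then u else b) \<in> A" using u by auto
          show "\<And>x. x \<in> FB \<Longrightarrow> (if x \<in> FA then u else b) \<in> B" using b dis by auto
          show "\<And>x. (if (if x \<in> FA then u else b) \<in> FA then u else b) = b"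
            using u b by auto
        qed
      next
        case c1: False
        show False
        proof (cases "\<exists>u\<in>B-FB. \<exists>a\<in>A-FB. True")
          case True
          then obtain u a where u: "u \<in> B" "u \<notin> FB" and a: "a \<in> A" "a \<notin> FB" by blast
          show False
          proof (rule key[of "\<lambda>x. if x \<in> FB then u else a" a])
            show "\<And>x. x \<in> FB \<Longrightarrow> (if x \<in> FB then u else a) \<in> B" using u by auto
            show "\<And>x. x \<in> FA \<Longrightarrow> (if x \<in> FB then u else a) \<in> A" using a dis by auto
            show "\<And>x. (if (if x \<in> FB then u else a) \<in> FB then u else a) = a"
              using u a by auto
          qed
        next
          case c2: False
          have cs: "(A \<subseteq> FA \<or> B \<subseteq> FA) \<and> (B \<subseteq> FB \<or> A \<subseteq> FB)" using c1 c2 by blast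
          have cu1: "card (FA \<union> FB) = card FA + card FB" using dis by (simp add: card_Un_disjoint)
          have cu2: "card (A \<union> B) = card A + card B" using H by (simp add: card_Un_disjoint)
          show False
          proof (cases "A \<subseteq> FA")
            case AFA: True
            show False
            proof (cases "B \<subseteq> FB")
              case BFB: True
              have "card A \<le> card FA" "card B \<le> card FB" using AFA BFB by (simp_all add: card_mono)
              hence "card A = card FA" "card B = card FB" using cu1 cu2 cd by linarith+
              hence eA: "A = FA" and eB: "B = FB" using AFA BFB by (simp_all add: card_subset_eq)
              have "\<not> SIA P"
                by (rule notSIA_closed[OF a0 b0]) (use H memA memB eA eB in auto)
              thus False using sia by blast
            next
              case False
              hence "A \<subseteq> FB" using cs by blast
              thus False using AFA dis H by blast
            qed
          next
            case nA: False
            hence BFA: "B \<subseteq> FA" using cs by blast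
            show False
            proof (cases "A \<subseteq> FB")
              case AFB: True
              have "card A \<le> card FB" "card B \<le> card FA" using AFB BFA by (simp_all add: card_mono)
              hence "card A = card FB" "card B = card FA" using cu1 cu2 cd by linarith+
              hence eA: "A = FB" and eB: "B = FA" using AFB BFA by (simp_all add: card_subset_eq)
              have "\<not> SIA P"
                by (rule notSIA_period[OF a0, of B]) (use H memA memB eA eB in auto)
              thus False using sia by blast
            next
              case False
              hence "B \<subseteq> FB" using cs by blast
              thus False using BFA dis H by blast
            qed
          qed
        qed
      qed
    qed
  qed
qed

theorem proposition1:
  assumes "CARD('n::finite) \<ge> 3"
  shows "(G_class :: (real^'n^'n) set) \<subset> S1"
proof -
  obtain S :: "'n set" where "card S = 3" using ex_card[OF assms] by blast
  then obtain a b c :: 'n where abc: "a \<noteq> b" "b \<noteq> c" "a \<noteq> c" by (auto simp: card_3_iff)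
  have cpos: "real CARD('n) > 0" by simp
  define P0 :: "real^'n^'n" where "P0 = (\<chi> i j. if i = a then (if j = b then 1 else 0)
      else if i = c then (if j = a then 1/2 else 0) + (if j = c then 1/2 else 0)
      else 1 / real CARD('n))"
  have P0a: "P0 $ a $ j = (if j = b then 1 else 0)" for j by (simp add: P0_def)
  have P0c: "P0 $ c $ j = (if j = a then 1/2 else 0) + (if j = c then 1/2 else 0)" for j
    using abc by (simp add: P0_def)
  have P0o: "i \<noteq> a \<Longrightarrow> i \<noteq> c \<Longrightarrow> P0 $ i $ j = 1 / real CARD('n)" for i j by (simp add: P0_def)
  have st: "stochastic P0"
    unfolding stochastic_def
  proof (intro conjI allI)
    fix i j show "P0 $ i $ j \<ge> 0" by (simp add: P0_def)
  next
    fix i show "(\<Sum>j\<in>UNIV. P0 $ i $ j) = 1"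
    proof (cases "i = a")
      case True then show ?thesis by (simp add: P0a)
    next
      case na: False
      show ?thesis
      proof (cases "i = c")
        case True then show ?thesis using abc by (simp add: P0c sum.distrib)
      next
        case False then show ?thesis using na cpos by (simp add: P0o)
      qed
    qed
  qed
  have Fa: "F_P P0 {a} = {b}" by (auto simp: F_P_def P0a)
  have Fc: "F_P P0 {c} = {a, c}" using abc by (auto simp: F_P_def P0c split: if_splits)
  have Ffull: "F_P P0 A = UNIV" if "i \<in> A" "i \<noteq> a" "i \<noteq> c" for i A
  proof -
    have "\<forall>j. 0 < P0 $ i $ j" using that cpos by (simp add: P0o)
    thus ?thesis using that(1) by (auto simp: F_P_def)
  qed
  have Fne: "F_P P0 A \<noteq> {}" if ne: "A \<noteq> {}" for A
  proof -
    obtain i where "i \<in> A" using ne by blast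
    moreover obtain j where "P0$i$j > 0" using stoch_row_pos[OF st] by blast
    ultimately show ?thesis by (auto simp: F_P_def)
  qed
  have inS1: "P0 \<in> S1" unfolding S1_def
  proof (intro CollectI conjI allI impI st)
    fix A B :: "'n set" assume H: "A \<noteq> {} \<and> B \<noteq> {} \<and> A \<inter> B = {}"
    show "F_P P0 A \<inter> F_P P0 B \<noteq> {} \<or>
         (F_P P0 A \<inter> F_P P0 B = {} \<and> card (F_P P0 A \<union> F_P P0 B) > card (A \<union> B))"
    proof (cases "A \<subseteq> {a, c} \<and> B \<subseteq> {a, c}")
      case True
      hence "(A = {a} \<and> B = {c}) \<or> (A = {c} \<and> B = {a})" using H abc by blast
      moreover have "card {b, a, c} = 3" "card {a, c} = 2" using abc by auto
      ultimately show ?thesis using abc Fa Fc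
        by (auto simp: insert_commute)
    next
      case False
      then obtain i where "i \<in> A \<or> i \<in> B" "i \<noteq> a" "i \<noteq> c" by blast
      then show ?thesis using Ffull Fne H by (metis inf_top.right_neutral inf_top_left)
    qed
  qed
  define q :: "'n \<Rightarrow> 'n" where "q = (\<lambda>x. if x = b then a else c)"
  have qq: "q (q x) = c" for x using abc by (simp add: q_def)
  have "\<not> SIA (detm q ** P0)"
  proof (rule notSIA_closed[of b "{b}" a "{a, c}"])
    show "\<forall>x\<in>{b}. \<forall>j. (detm q ** P0) $ x $ j \<noteq> 0 \<longrightarrow> j \<in> {b}"
      by (auto simp: detm_mult q_def P0a)
    show "\<forall>x\<in>{a, c}. \<forall>j. (detm q ** P0) $ x $ j \<noteq> 0 \<longrightarrow> j \<in> {a, c}"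
      using abc by (auto simp: detm_mult q_def P0c)
  qed (use abc in auto)
  hence "P0 \<notin> G_class" using detm_SIA[of q c] qq by (auto simp: G_class_def)
  moreover have "G_class \<subseteq> (S1 :: (real^'n^'n) set)" using G_sub_S1 by blast
  ultimately show ?thesis using inS1 by blast
qed

end
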